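(* Assume the capacities satisfy (C1)–(C3). Let $\{\overline Z_t\}_{t\ge0}$ be the generation sizes of the NR-process defined below, and let $\{\mathcal N_t\}_{t\ge0}$ be the reachable sets of a uniformly chosen node $A$ in the Poissonian random graph $G_N$. For $\eta,\delta\in(-1/2,1/2)$ and all $t\le(1/2+\eta)\log_\nu N$, $$\mathbb P\Big(\sum_{k=0}^t\overline Z_k>N^{1/2+\delta}\Big)=O\big((\log_\nu N)N^{-(\delta-\eta)}\big)\quad\text{and}\quad\mathbb P\big(|\mathcal N_t|>N^{1/2+\delta}\big)=O\big((\log_\nu N)N^{-(\delta-\eta)}\big).$$
   Context: Capacities $\lambda_1,\dots,\lambda_N>0$ deterministic; $l_N=\sum_i\lambda_i$, $\mu_N=\frac1N\sum_i\lambda_i$, $\nu_N=\sum_i\lambda_i^2/\sum_i\lambda_i$, $f^{(N)}_n=\frac1N\sum_i e^{-\lambda_i}\frac{\lambda_i^n}{n!}$, $g^{(N)}_n=\frac{1}{N\mu_N}\sum_i e^{-\lambda_i}\frac{\lambda_i^{n+1}}{n!}$; $d_{TV}(p,q)=\frac12\sum_j|p_j-q_j|$. (C1): there are $\mu\in(0,\infty)$, $\nu\in(1,\infty)$, $\alpha_1>0$ with $|\mu_N-\mu|,|\nu_N-\nu|=O(N^{-\alpha_1})$. (C2): there are $N$-independent sequences $f,g$ and $\alpha_2>0$ with $d_{TV}(f^{(N)},f),d_{TV}(g^{(N)},g)=O(N^{-\alpha_2})$. (C3): there is $\tau>3$ such that for every $\varepsilon>0$ (with $\gamma:=\frac1{\tau-1}+\varepsilon<\frac12$),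 $\limsup_N\frac1N\sum_i\lambda_i^{\tau-1-\varepsilon}<\infty$ and $\max_i\lambda_i\le N^\gamma$. NR-process: marked branching process with $\overline Z_0=1$, root mark uniform on $\{1,\dots,N\}$; an individual with mark $m$ has, independently for each $i\in\{1,\dots,N\}$, a Poisson$(\lambda_i\lambda_m/l_N)$ number of children with mark $i$, independently over individuals; $\overline Z_t$ is the size of generation $t$. Poissonian random graph: independent Poisson$(\lambda_i\lambda_j/l_N)$ numbers of edges between distinct nodes $i,j$; $\mathcal N_t=\{j: d(A,j)\le t\}$ with $d$ the graph distance. *)

theory Defs
  imports "HOL-Probability.Probability" "HOL-Library.Landau_Symbols"
begin

text \<open>Capacities: lam N i is the capacity of node i (i < N) in the N-th graph.
  Nodes/marks are indexed by {0..<N} instead of {1..N}.\<close>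

definition lN :: "(nat \<Rightarrow> nat \<Rightarrow> real) \<Rightarrow> nat \<Rightarrow> real" where
  "lN lam N = (\<Sum>i<N. lam N i)"

definition muN :: "(nat \<Rightarrow> nat \<Rightarrow> real) \<Rightarrow> nat \<Rightarrow> real" where
  "muN lam N = lN lam N / real N"

definition nuN :: "(nat \<Rightarrow> nat \<Rightarrow> real) \<Rightarrow> nat \<Rightarrow> real" where
  "nuN lam N = (\<Sum>i<N. (lam N i)\<^sup>2) / lN lam N"

definition fN :: "(nat \<Rightarrow> nat \<Rightarrow> real) \<Rightarrow> nat \<Rightarrow> nat \<Rightarrow> real" where
  "fN lam N n = (1 / real N) * (\<Sum>i<N. exp (- lam N i) * lam N i ^ n / fact n)"

definition gN :: "(nat \<Rightarrow> nat \<Rightarrow> real) \<Rightarrow> nat \<Rightarrow> nat \<Rightarrow> real" where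
  "gN lam N n = (1 / (real N * muN lam N)) * (\<Sum>i<N. exp (- lam N i) * lam N i ^ (n+1) / fact n)"

text \<open>Total variation distance of two sequences (the series is required to converge
  separately where it is used).\<close>
definition dTV :: "(nat \<Rightarrow> real) \<Rightarrow> (nat \<Rightarrow> real) \<Rightarrow> real" where
  "dTV p q = (1/2) * (\<Sum>j. \<bar>p j - q j\<bar>)"

definition cond_C1 :: "(nat \<Rightarrow> nat \<Rightarrow> real) \<Rightarrow> real \<Rightarrow> real \<Rightarrow> bool" where
  "cond_C1 lam mu nu \<longleftrightarrow> 0 < mu \<and> 1 < nu \<and>
     (\<exists>\<alpha>1>0. (\<lambda>N. \<bar>muN lam N - mu\<bar>) \<in> O(\<lambda>N. real N powr (-\<alpha>1)) \<and>
              (\<lambda>N. \<bar>nuN lam N - nu\<bar>) \<in> O(\<lambda>N. real N powr (-\<alpha>1)))"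

definition cond_C2 :: "(nat \<Rightarrow> nat \<Rightarrow> real) \<Rightarrow> bool" where
  "cond_C2 lam \<longleftrightarrow> (\<exists>(f::nat \<Rightarrow> real) (g::nat \<Rightarrow> real) \<alpha>2. \<alpha>2 > 0 \<and>
     (\<forall>\<^sub>F N in sequentially. summable (\<lambda>j. \<bar>fN lam N j - f j\<bar>) \<and>
                               summable (\<lambda>j. \<bar>gN lam N j - g j\<bar>)) \<and>
     (\<lambda>N. dTV (fN lam N) f) \<in> O(\<lambda>N. real N powr (-\<alpha>2)) \<and>
     (\<lambda>N. dTV (gN lam N) g) \<in> O(\<lambda>N. real N powr (-\<alpha>2)))"

definition cond_C3 :: "(nat \<Rightarrow> nat \<Rightarrow> real) \<Rightarrow> bool" where
  "cond_C3 lam \<longleftrightarrow> (\<exists>\<tau>::real. \<tau> > 3 \<and>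
     (\<forall>\<epsilon>>0. 1/(\<tau>-1) + \<epsilon> < 1/2 \<longrightarrow>
        limsup (\<lambda>N. ereal ((1/real N) * (\<Sum>i<N. lam N i powr (\<tau> - 1 - \<epsilon>)))) < \<infinity> \<and>
        (\<forall>N\<ge>1. \<forall>i<N. lam N i \<le> real N powr (1/(\<tau>-1) + \<epsilon>))))"

text \<open>A generation is the list of marks of its individuals.\<close>
definition nr_step :: "(nat \<Rightarrow> nat \<Rightarrow> real) \<Rightarrow> nat \<Rightarrow> nat list \<Rightarrow> nat list pmf" where
  "nr_step lam N ms =
     map_pmf (\<lambda>c. concat (map (\<lambda>j. concat (map (\<lambda>i. replicate (c (j, i)) i) [0..<N]))
                              [0..<length ms]))
       (Pi_pmf ({0..<length ms} \<times> {0..<N}) 0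
          (\<lambda>(j, i). poisson_pmf (lam N i * lam N (ms ! j) / lN lam N)))"

primrec nr_history :: "(nat \<Rightarrow> nat \<Rightarrow> real) \<Rightarrow> nat \<Rightarrow> nat \<Rightarrow> nat list list pmf" where
  "nr_history lam N 0 = map_pmf (\<lambda>m. [[m]]) (pmf_of_set {0..<N})"
| "nr_history lam N (Suc t) =
     bind_pmf (nr_history lam N t) (\<lambda>h. map_pmf (\<lambda>nxt. h @ [nxt]) (nr_step lam N (last h)))"

definition nr_total_tail :: "(nat \<Rightarrow> nat \<Rightarrow> real) \<Rightarrow> nat \<Rightarrow> nat \<Rightarrow> real \<Rightarrow> real" where
  "nr_total_tail lam N t x =
     measure_pmf.prob (nr_history lam N t) {h. real (\<Sum>k\<le>t. length (h ! k)) > x}"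

definition poi_graph :: "(nat \<Rightarrow> nat \<Rightarrow> real) \<Rightarrow> nat \<Rightarrow> (nat \<times> nat \<Rightarrow> nat) pmf" where
  "poi_graph lam N = Pi_pmf {(i, j). i < j \<and> j < N} 0
      (\<lambda>(i, j). poisson_pmf (lam N i * lam N j / lN lam N))"

definition adj_rel :: "nat \<Rightarrow> (nat \<times> nat \<Rightarrow> nat) \<Rightarrow> (nat \<times> nat) set" where
  "adj_rel N e = {(i, j). i < N \<and> j < N \<and> i \<noteq> j \<and> e (min i j, max i j) > 0}"

definition ball_t :: "nat \<Rightarrow> (nat \<times> nat \<Rightarrow> nat) \<Rightarrow> nat \<Rightarrow> nat \<Rightarrow> nat set" where
  "ball_t N e a t = {j. \<exists>k\<le>t. (a, j) \<in> adj_rel N e ^^ k}"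

definition graph_ball_tail :: "(nat \<Rightarrow> nat \<Rightarrow> real) \<Rightarrow> nat \<Rightarrow> nat \<Rightarrow> real \<Rightarrow> real" where
  "graph_ball_tail lam N t x =
     measure_pmf.prob (pair_pmf (pmf_of_set {0..<N}) (poi_graph lam N))
       {(a, e). real (card (ball_t N e a t)) > x}"

end

theory Submission
  imports Defs
begin
lemma poisson_sums:
  fixes r :: real assumes r: "0 < r"
  shows "(\<lambda>k. r ^ k / fact k * exp (-r) * real k) sums r"
proof -
  have e: "(\<lambda>n. r ^ n / fact n) sums exp r"
    using exp_converges[of r] by (simp add: divide_inverse mult.commute)
  have "(\<lambda>n. r * exp (-r) * (r ^ n / fact n)) sums (r * exp (-r) * exp r)"
    by (rule sums_mult[OF e])
  also have "r * exp (-r) * exp r = r" by (simp add: exp_minus field_simps)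
  finally have s: "(\<lambda>n. r * exp (-r) * (r ^ n / fact n)) sums r" .
  have "(\<lambda>n. r ^ Suc n / fact (Suc n) * exp (-r) * real (Suc n)) = (\<lambda>n. r * exp (-r) * (r ^ n / fact n))"
  proof (rule ext)
    fix n
    have f: "fact (Suc n) = (real n + 1) * (fact n::real)" by simp
    have p: "(fact n::real) > 0" by simp
    show "r ^ Suc n / fact (Suc n) * exp (-r) * real (Suc n) = r * exp (-r) * (r ^ n / fact n)"
    proof -
      have q: "real n + 1 > 0" by simp
      have "r ^ Suc n / fact (Suc n) * exp (-r) * real (Suc n) = (r * r ^ n * exp (-r) / fact n) * ((real n + 1) / (real n + 1))"
      proof -
        have z: "fact n + fact n * real n \<noteq> (0::real)" proof -
          have "fact n + fact n * real n > 0" using p by (intro add_pos_nonneg) auto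
          then show ?thesis by linarith
        qed
        show ?thesis unfolding f using z by (simp add: field_simps)
      qed
      also have "\<dots> = r * exp (-r) * (r ^ n / fact n)" using q by simp
      finally show ?thesis .
    qed
  qed
  with s have "(\<lambda>n. r ^ Suc n / fact (Suc n) * exp (-r) * real (Suc n)) sums r" by simp
  then have "(\<lambda>k. r ^ k / fact k * exp (-r) * real k) sums (r + r ^ 0 / fact 0 * exp (-r) * real 0)"
    by (subst (asm) sums_Suc_iff) simp
  then show ?thesis by simp
qed

lemma poisson_mean:
  fixes r :: real assumes r: "0 < r"
  shows "(\<integral>\<^sup>+x. of_nat x \<partial>measure_pmf (poisson_pmf r)) = ennreal r"
proof -
  have "(\<integral>\<^sup>+x. of_nat x \<partial>measure_pmf (poisson_pmf r)) = (\<integral>\<^sup>+x. ennreal (pmf (poisson_pmf r) x) * of_nat x \<partial>count_space UNIV)"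
    by (rule nn_integral_measure_pmf)
  also have "\<dots> = (\<Sum>x. ennreal (r ^ x / fact x * exp (-r) * real x))"
    using r by (simp add: nn_integral_count_space_nat ennreal_of_nat_eq_real_of_nat ennreal_mult[symmetric])
  also have "\<dots> = ennreal r"
    using r poisson_sums[OF r] by (intro suminf_ennreal_eq) auto
  finally show ?thesis .
qed

lemma poisson_pos_prob:
  fixes r :: real assumes r: "0 < r"
  shows "(\<integral>\<^sup>+x. indicator {0<..} x \<partial>measure_pmf (poisson_pmf r)) \<le> ennreal r"
proof -
  have "(\<integral>\<^sup>+x. indicator {0<..} x \<partial>measure_pmf (poisson_pmf r)) \<le> (\<integral>\<^sup>+x. of_nat x \<partial>measure_pmf (poisson_pmf r))"
    by (intro nn_integral_mono) (auto simp: indicator_def)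
  then show ?thesis using poisson_mean[OF r] by simp
qed

lemma sum_list_concat': "sum_list (concat xss) = sum_list (map sum_list (xss :: 'a::monoid_add list list))"
  by (induct xss) auto

lemma sum_list_nr:
  fixes g :: "nat \<Rightarrow> ennreal"
  shows "sum_list (map g (concat (map (\<lambda>j. concat (map (\<lambda>i. replicate (c (j, i)) i) [0..<N])) [0..<L])))
     = (\<Sum>j<L. \<Sum>i<N. of_nat (c (j, i)) * g i)"
  by (simp add: map_concat sum_list_concat' o_def sum_list_replicate interv_sum_list_conv_sum_set_nat atLeast0LessThan)

lemma pi_comp_mean:
  assumes "finite A" "x \<in> A" "0 < r x"
  shows "(\<integral>\<^sup>+c. of_nat (c x) \<partial>measure_pmf (Pi_pmf A 0 (\<lambda>y. poisson_pmf (r y)))) = ennreal (r x)"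
proof -
  have "(\<integral>\<^sup>+c. of_nat (c x) \<partial>measure_pmf (Pi_pmf A 0 (\<lambda>y. poisson_pmf (r y))))
      = (\<integral>\<^sup>+n. of_nat n \<partial>measure_pmf (map_pmf (\<lambda>c. c x) (Pi_pmf A 0 (\<lambda>y. poisson_pmf (r y)))))"
    by simp
  also have "\<dots> = (\<integral>\<^sup>+n. of_nat n \<partial>measure_pmf (poisson_pmf (r x)))"
    using assms by (simp add: Pi_pmf_component)
  also have "\<dots> = ennreal (r x)" using poisson_mean assms by blast
  finally show ?thesis .
qed

lemma nr_step_mean:
  fixes g :: "nat \<Rightarrow> ennreal"
  assumes pos: "\<And>i. i < N \<Longrightarrow> lam N i > 0" and ms: "set ms \<subseteq> {0..<N}"
  shows "(\<integral>\<^sup>+ys. sum_list (map g ys) \<partial>measure_pmf (nr_step lam N ms))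
       = (\<Sum>j<length ms. \<Sum>i<N. ennreal (lam N i * lam N (ms ! j) / lN lam N) * g i)"
proof (cases "N = 0")
  case True
  then show ?thesis by (simp add: nr_step_def)
next
  case False
  have lpos: "lN lam N > 0" unfolding lN_def using False pos by (intro sum_pos) auto
  define r where "r = (\<lambda>(j, i). lam N i * lam N (ms ! j) / lN lam N)"
  have rpos: "r (j, i) > 0" if "j < length ms" "i < N" for j i
  proof -
    have "ms ! j < N" using ms that by (meson atLeastLessThan_iff nth_mem subsetD)
    then show ?thesis unfolding r_def using pos that lpos by simp
  qed
  have eq: "(\<lambda>(j, i). poisson_pmf (lam N i * lam N (ms ! j) / lN lam N)) = (\<lambda>y. poisson_pmf (r y))"
    by (auto simp: r_def)
  have "(\<integral>\<^sup>+ys. sum_list (map g ys) \<partial>measure_pmf (nr_step lam N ms))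
     = (\<integral>\<^sup>+c. (\<Sum>j<length ms. \<Sum>i<N. of_nat (c (j, i)) * g i) \<partial>measure_pmf (Pi_pmf ({0..<length ms} \<times> {0..<N}) 0 (\<lambda>y. poisson_pmf (r y))))"
    unfolding nr_step_def eq by (simp add: sum_list_nr)
  also have "\<dots> = (\<Sum>j<length ms. \<Sum>i<N. (\<integral>\<^sup>+c. of_nat (c (j, i)) \<partial>measure_pmf (Pi_pmf ({0..<length ms} \<times> {0..<N}) 0 (\<lambda>y. poisson_pmf (r y)))) * g i)"
    by (simp add: nn_integral_sum nn_integral_multc)
  also have "\<dots> = (\<Sum>j<length ms. \<Sum>i<N. ennreal (r (j, i)) * g i)"
    by (intro sum.cong refl, subst pi_comp_mean) (auto intro: rpos)
  finally show ?thesis by (simp add: r_def)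
qed

lemma nr_step_set:
  assumes "ys \<in> set_pmf (nr_step lam N ms)"
  shows "set ys \<subseteq> {0..<N}"
  using assms unfolding nr_step_def by auto

definition Wn :: "(nat \<Rightarrow> nat \<Rightarrow> real) \<Rightarrow> nat \<Rightarrow> nat list \<Rightarrow> ennreal" where
  "Wn lam N ms = sum_list (map (\<lambda>m. ennreal (lam N m)) ms)"

lemma sum_list_as_sum: "sum_list (map f ms) = (\<Sum>j<length ms. f (ms ! j))"
  by (simp add: sum_list_sum_nth atLeast0LessThan)

lemma nr_len:
  assumes pos: "\<And>i. i < N \<Longrightarrow> lam N i > 0" and ms: "set ms \<subseteq> {0..<N}"
  shows "(\<integral>\<^sup>+ys. of_nat (length ys) \<partial>measure_pmf (nr_step lam N ms)) = Wn lam N ms"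
proof (cases "N = 0")
  case True
  then have "ms = []" using ms by auto
  then show ?thesis by (simp add: nr_step_def Wn_def)
next
  case False
  have lpos: "lN lam N > 0" unfolding lN_def using False pos by (intro sum_pos) auto
  have "(\<integral>\<^sup>+ys. of_nat (length ys) \<partial>measure_pmf (nr_step lam N ms))
      = (\<integral>\<^sup>+ys. sum_list (map (\<lambda>_. 1::ennreal) ys) \<partial>measure_pmf (nr_step lam N ms))"
    by (simp add: sum_list_triv)
  also have "\<dots> = (\<Sum>j<length ms. \<Sum>i<N. ennreal (lam N i * lam N (ms ! j) / lN lam N))"
    using nr_step_mean[where lam=lam and N=N and ms=ms and g="\<lambda>_. 1", OF pos ms] by simp
  also have "\<dots> = (\<Sum>j<length ms. ennreal (lam N (ms ! j)))"
  proof (intro sum.cong refl)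
    fix j assume j: "j \<in> {..<length ms}"
    have mj: "ms ! j < N" using ms j by (meson atLeastLessThan_iff lessThan_iff nth_mem subsetD)
    have "(\<Sum>i<N. ennreal (lam N i * lam N (ms ! j) / lN lam N)) = ennreal (\<Sum>i<N. lam N i * lam N (ms ! j) / lN lam N)"
      using pos mj lpos by (intro sum_ennreal) (auto intro!: divide_nonneg_pos mult_nonneg_nonneg less_imp_le)
    also have "(\<Sum>i<N. lam N i * lam N (ms ! j) / lN lam N) = lam N (ms ! j)"
      using lpos by (simp add: sum_divide_distrib[symmetric] sum_distrib_right[symmetric] lN_def[symmetric])
    finally show "(\<Sum>i<N. ennreal (lam N i * lam N (ms ! j) / lN lam N)) = ennreal (lam N (ms ! j))" .
  qed
  also have "\<dots> = Wn lam N ms" by (simp add: Wn_def sum_list_as_sum)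
  finally show ?thesis .
qed

lemma nr_W:
  assumes pos: "\<And>i. i < N \<Longrightarrow> lam N i > 0" and ms: "set ms \<subseteq> {0..<N}"
  shows "(\<integral>\<^sup>+ys. Wn lam N ys \<partial>measure_pmf (nr_step lam N ms)) = ennreal (nuN lam N) * Wn lam N ms"
proof (cases "N = 0")
  case True
  then have "ms = []" using ms by auto
  then show ?thesis by (simp add: nr_step_def Wn_def)
next
  case False
  have lpos: "lN lam N > 0" unfolding lN_def using False pos by (intro sum_pos) auto
  have nupos: "nuN lam N \<ge> 0" unfolding nuN_def using lpos by (auto intro!: divide_nonneg_pos sum_nonneg)
  have "(\<integral>\<^sup>+ys. Wn lam N ys \<partial>measure_pmf (nr_step lam N ms))
      = (\<Sum>j<length ms. \<Sum>i<N. ennreal (lam N i * lam N (ms ! j) / lN lam N) * ennreal (lam N i))"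
    unfolding Wn_def using nr_step_mean[where lam=lam and N=N and ms=ms and g="\<lambda>i. ennreal (lam N i)", OF pos ms] by simp
  also have "\<dots> = (\<Sum>j<length ms. ennreal (nuN lam N) * ennreal (lam N (ms ! j)))"
  proof (intro sum.cong refl)
    fix j assume j: "j \<in> {..<length ms}"
    have mj: "ms ! j < N" using ms j by (meson atLeastLessThan_iff lessThan_iff nth_mem subsetD)
    have "(\<Sum>i<N. ennreal (lam N i * lam N (ms ! j) / lN lam N) * ennreal (lam N i))
        = (\<Sum>i<N. ennreal (lam N i * lam N (ms ! j) / lN lam N * lam N i))"
      using pos mj lpos by (intro sum.cong refl, subst ennreal_mult[symmetric]) (auto intro!: divide_nonneg_pos mult_nonneg_nonneg less_imp_le)
    also have "\<dots> = ennreal (\<Sum>i<N. lam N i * lam N (ms ! j) / lN lam N * lam N i)"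
      using pos mj lpos by (intro sum_ennreal) (auto intro!: divide_nonneg_pos mult_nonneg_nonneg less_imp_le)
    also have "(\<Sum>i<N. lam N i * lam N (ms ! j) / lN lam N * lam N i) = nuN lam N * lam N (ms ! j)"
      unfolding nuN_def by (simp add: sum_divide_distrib[symmetric] sum_distrib_right[symmetric] power2_eq_square field_simps sum_distrib_left sum_distrib_right mult_ac)
    also have "ennreal (nuN lam N * lam N (ms ! j)) = ennreal (nuN lam N) * ennreal (lam N (ms ! j))"
      using nupos pos[OF mj] by (simp add: ennreal_mult)
    finally show "(\<Sum>i<N. ennreal (lam N i * lam N (ms ! j) / lN lam N) * ennreal (lam N i)) = ennreal (nuN lam N) * ennreal (lam N (ms ! j))" .
  qed
  also have "\<dots> = ennreal (nuN lam N) * Wn lam N ms" by (simp add: Wn_def sum_list_as_sum sum_distrib_left)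
  finally show ?thesis .
qed

lemma hist_set:
  assumes N: "N > 0"
  shows "h \<in> set_pmf (nr_history lam N t) \<Longrightarrow> length h = Suc t \<and> (\<forall>g\<in>set h. set g \<subseteq> {0..<N})"
proof (induction t arbitrary: h)
  case 0
  then show ?case using N by auto
next
  case (Suc t)
  then obtain h0 ys where h: "h = h0 @ [ys]" "h0 \<in> set_pmf (nr_history lam N t)" "ys \<in> set_pmf (nr_step lam N (last h0))"
    by auto
  then show ?case using Suc.IH[OF h(2)] nr_step_set[OF h(3)] by auto
qed

definition Sn :: "nat \<Rightarrow> nat list list \<Rightarrow> ennreal" where
  "Sn t h = (\<Sum>k\<le>t. of_nat (length (h ! k)))"

lemma Sn_append:
  assumes "length h = Suc t"
  shows "Sn (Suc t) (h @ [ys]) = Sn t h + of_nat (length ys)"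
proof -
  have "Sn t (h @ [ys]) = Sn t h" unfolding Sn_def
    using assms by (intro sum.cong refl) (auto simp: nth_append)
  then show ?thesis using assms unfolding Sn_def by (simp add: nth_append)
qed

lemma hist_mean:
  assumes N: "N > 0" and pos: "\<And>i. i < N \<Longrightarrow> lam N i > 0"
  shows "(\<integral>\<^sup>+h. Sn t h \<partial>measure_pmf (nr_history lam N t)) = 1 + (\<Sum>k<t. ennreal (muN lam N) * ennreal (nuN lam N) ^ k)
       \<and> (\<integral>\<^sup>+h. Wn lam N (last h) \<partial>measure_pmf (nr_history lam N t)) = ennreal (muN lam N) * ennreal (nuN lam N) ^ t"
proof (induction t)
  case 0
  have lpos: "lN lam N > 0" unfolding lN_def using N pos by (intro sum_pos) auto
  have "(\<integral>\<^sup>+h. Wn lam N (last h) \<partial>measure_pmf (nr_history lam N 0)) = (\<integral>\<^sup>+m. ennreal (lam N m) \<partial>measure_pmf (pmf_of_set {0..<N}))"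
    by (simp add: Wn_def)
  also have "\<dots> = (\<Sum>m\<in>{0..<N}. ennreal (lam N m)) / of_nat N"
    using N by (subst nn_integral_pmf_of_set) auto
  also have "\<dots> = ennreal (lN lam N) / ennreal (real N)"
    using pos by (subst sum_ennreal) (auto simp: lN_def atLeast0LessThan less_imp_le ennreal_of_nat_eq_real_of_nat)
  also have "\<dots> = ennreal (muN lam N)"
    using lpos N by (simp add: divide_ennreal muN_def)
  finally show ?case by (simp add: Sn_def)
next
  case (Suc t)
  have supp: "length h = Suc t" "set (last h) \<subseteq> {0..<N}" if "h \<in> set_pmf (nr_history lam N t)" for h
    using hist_set[OF N that] by (auto intro!: last_in_set)
  have "(\<integral>\<^sup>+h. Sn (Suc t) h \<partial>measure_pmf (nr_history lam N (Suc t)))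
      = (\<integral>\<^sup>+h. (\<integral>\<^sup>+ys. Sn (Suc t) (h @ [ys]) \<partial>measure_pmf (nr_step lam N (last h))) \<partial>measure_pmf (nr_history lam N t))"
    by simp
  also have "\<dots> = (\<integral>\<^sup>+h. Sn t h + Wn lam N (last h) \<partial>measure_pmf (nr_history lam N t))"
  proof (intro nn_integral_cong_AE AE_pmfI)
    fix h assume h: "h \<in> set_pmf (nr_history lam N t)"
    have "(\<integral>\<^sup>+ys. Sn (Suc t) (h @ [ys]) \<partial>measure_pmf (nr_step lam N (last h)))
        = (\<integral>\<^sup>+ys. Sn t h + of_nat (length ys) \<partial>measure_pmf (nr_step lam N (last h)))"
      using supp[OF h] by (simp add: Sn_append)
    also have "\<dots> = Sn t h + (\<integral>\<^sup>+ys. of_nat (length ys) \<partial>measure_pmf (nr_step lam N (last h)))"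
      by (subst nn_integral_add) auto
    also have "\<dots> = Sn t h + Wn lam N (last h)"
      using nr_len[where lam=lam and N=N, OF pos supp(2)[OF h]] by simp
    finally show "(\<integral>\<^sup>+ys. Sn (Suc t) (h @ [ys]) \<partial>measure_pmf (nr_step lam N (last h))) = Sn t h + Wn lam N (last h)" .
  qed
  also have "\<dots> = (\<integral>\<^sup>+h. Sn t h \<partial>measure_pmf (nr_history lam N t)) + (\<integral>\<^sup>+h. Wn lam N (last h) \<partial>measure_pmf (nr_history lam N t))"
    by (subst nn_integral_add) auto
  also have "\<dots> = 1 + (\<Sum>k<Suc t. ennreal (muN lam N) * ennreal (nuN lam N) ^ k)"
    using Suc.IH by (simp add: add.assoc)
  finally have A: "(\<integral>\<^sup>+h. Sn (Suc t) h \<partial>measure_pmf (nr_history lam N (Suc t))) = 1 + (\<Sum>k<Suc t. ennreal (muN lam N) * ennreal (nuN lam N) ^ k)" .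
  have "(\<integral>\<^sup>+h. Wn lam N (last h) \<partial>measure_pmf (nr_history lam N (Suc t)))
      = (\<integral>\<^sup>+h. (\<integral>\<^sup>+ys. Wn lam N ys \<partial>measure_pmf (nr_step lam N (last h))) \<partial>measure_pmf (nr_history lam N t))"
    by simp
  also have "\<dots> = (\<integral>\<^sup>+h. ennreal (nuN lam N) * Wn lam N (last h) \<partial>measure_pmf (nr_history lam N t))"
    by (intro nn_integral_cong_AE AE_pmfI nr_W[where lam=lam and N=N, OF pos] supp)
  also have "\<dots> = ennreal (nuN lam N) * (\<integral>\<^sup>+h. Wn lam N (last h) \<partial>measure_pmf (nr_history lam N t))"
    by (subst nn_integral_cmult) auto
  also have "\<dots> = ennreal (muN lam N) * ennreal (nuN lam N) ^ Suc t"
    using Suc.IH by (simp add: mult_ac)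
  finally show ?case using A by simp
qed

fun pathok :: "nat \<Rightarrow> (nat \<times> nat \<Rightarrow> nat) \<Rightarrow> nat \<Rightarrow> nat list \<Rightarrow> bool" where
  "pathok N e a [] = True"
| "pathok N e a (u # ys) = ((a, u) \<in> adj_rel N e \<and> pathok N e u ys)"

lemma pathok_suffix: "pathok N e a (pre @ b # zs) \<Longrightarrow> pathok N e b zs"
  by (induct pre arbitrary: a) auto

lemma pathok_set: "pathok N e a xs \<Longrightarrow> set xs \<subseteq> {0..<N}"
  by (induct xs arbitrary: a) (auto simp: adj_rel_def)

lemma reach_path:
  "(a, j) \<in> adj_rel N e ^^ k \<Longrightarrow>
    \<exists>xs. length xs \<le> k \<and> distinct (a # xs) \<and> pathok N e a xs \<and> last (a # xs) = j"
proof (induction k arbitrary: a)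
  case 0
  then show ?case by (intro exI[of _ "[]"]) auto
next
  case (Suc k)
  obtain u where u: "(a, u) \<in> adj_rel N e" "(u, j) \<in> adj_rel N e ^^ k"
    using relpow_Suc_D2[OF Suc.prems] by blast
  obtain ys where ys: "length ys \<le> k" "distinct (u # ys)" "pathok N e u ys" "last (u # ys) = j"
    using Suc.IH[OF u(2)] by blast
  show ?case
  proof (cases "a \<in> set (u # ys)")
    case False
    then show ?thesis using u ys by (intro exI[of _ "u # ys"]) auto
  next
    case True
    then obtain pre zs where pz: "u # ys = pre @ a # zs" by (meson split_list)
    have "length zs \<le> k" using ys(1) pz
      by (metis add_le_cancel_right le_add2 le_trans length_Cons length_append length_Cons add_Suc_right Suc_le_mono le_add_same_cancel2)
    moreover have "distinct (a # zs)" using ys(2) pz by (metis distinct_append)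
    moreover have "pathok N e a zs" using pathok_suffix[of N e u] ys(3) pz
      by (metis Cons_eq_append_conv pathok.simps(2) u(1))
    moreover have "last (a # zs) = j" using ys(4) pz by (metis last_appendR list.distinct(1))
    ultimately show ?thesis by (intro exI[of _ zs]) auto
  qed
qed

definition Lk :: "nat \<Rightarrow> nat \<Rightarrow> nat list set" where
  "Lk N k = {xs. set xs \<subseteq> {0..<N} \<and> length xs = k}"

lemma finite_Lk: "finite (Lk N k)"
  unfolding Lk_def by (rule finite_lists_length_eq) simp

lemma ball_card_le:
  "card (ball_t N e a t) \<le> (\<Sum>k\<le>t. card {xs \<in> Lk N k. distinct (a # xs) \<and> pathok N e a xs})"
proof -
  have sub: "ball_t N e a t \<subseteq> (\<Union>k\<le>t. (\<lambda>xs. last (a # xs)) ` {xs \<in> Lk N k. distinct (a # xs) \<and> pathok N e a xs})"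
  proof
    fix j assume "j \<in> ball_t N e a t"
    then obtain k where k: "k \<le> t" "(a, j) \<in> adj_rel N e ^^ k" unfolding ball_t_def by auto
    obtain xs where xs: "length xs \<le> k" "distinct (a # xs)" "pathok N e a xs" "last (a # xs) = j"
      using reach_path[OF k(2)] by blast
    have "xs \<in> Lk N (length xs)" using pathok_set[OF xs(3)] unfolding Lk_def by auto
    then show "j \<in> (\<Union>k\<le>t. (\<lambda>xs. last (a # xs)) ` {xs \<in> Lk N k. distinct (a # xs) \<and> pathok N e a xs})"
      using xs k by (intro UN_I[of "length xs"]) auto
  qed
  have fin: "finite (\<Union>k\<le>t. (\<lambda>xs. last (a # xs)) ` {xs \<in> Lk N k. distinct (a # xs) \<and> pathok N e a xs})"
    using finite_Lk by auto
  have "card (ball_t N e a t) \<le> card (\<Union>k\<le>t. (\<lambda>xs. last (a # xs)) ` {xs \<in> Lk N k. distinct (a # xs) \<and> pathok N e a xs})"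
    by (rule card_mono[OF fin sub])
  also have "\<dots> \<le> (\<Sum>k\<le>t. card ((\<lambda>xs. last (a # xs)) ` {xs \<in> Lk N k. distinct (a # xs) \<and> pathok N e a xs}))"
    by (rule card_UN_le) simp
  also have "\<dots> \<le> (\<Sum>k\<le>t. card {xs \<in> Lk N k. distinct (a # xs) \<and> pathok N e a xs})"
    by (intro sum_mono card_image_le) (simp add: finite_Lk)
  finally show ?thesis .
qed

fun keys :: "nat \<Rightarrow> nat list \<Rightarrow> (nat \<times> nat) list" where
  "keys a [] = []"
| "keys a (u # ys) = (min a u, max a u) # keys u ys"

lemma keys_set: "x \<in> set (keys a xs) \<Longrightarrow> fst x \<in> set (a # xs) \<and> snd x \<in> set (a # xs)"
proof (induct xs arbitrary: a)
  case Nil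
  then show ?case by simp
next
  case (Cons u ys)
  show ?case
  proof (cases "x = (min a u, max a u)")
    case True
    then show ?thesis by (simp add: min_def max_def)
  next
    case False
    then have "x \<in> set (keys u ys)" using Cons.prems by simp
    then show ?thesis using Cons.hyps by fastforce
  qed
qed

lemma prod_mono_ennreal:
  fixes f g :: "'a \<Rightarrow> ennreal"
  shows "(\<And>i. i \<in> A \<Longrightarrow> f i \<le> g i) \<Longrightarrow> prod f A \<le> prod g A"
  by (induct A rule: infinite_finite_induct) (auto intro!: mult_mono)

lemma keys_distinct: "distinct (a # xs) \<Longrightarrow> distinct (keys a xs)"
proof (induct xs arbitrary: a)
  case Nil
  then show ?case by simp
next
  case (Cons u ys)
  have "(min a u, max a u) \<notin> set (keys u ys)"
  proof
    assume "(min a u, max a u) \<in> set (keys u ys)"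
    from keys_set[OF this] have "min a u \<in> set (u # ys)" "max a u \<in> set (u # ys)" by auto
    then have "a \<in> set (u # ys)" by (cases "a \<le> u") (auto simp: min_def max_def)
    with Cons.prems show False by simp
  qed
  then show ?case using Cons by simp
qed

lemma keys_pathok: "pathok N e a xs \<Longrightarrow> x \<in> set (keys a xs) \<Longrightarrow> e x > 0 \<and> fst x < snd x \<and> snd x < N"
  by (induct xs arbitrary: a) (auto simp: adj_rel_def min_def max_def)

lemma keys_sub: "a < N \<Longrightarrow> set xs \<subseteq> {0..<N} \<Longrightarrow> distinct (a # xs) \<Longrightarrow> x \<in> set (keys a xs) \<Longrightarrow> fst x < snd x \<and> snd x < N"
proof (induct xs arbitrary: a)
  case Nil
  then show ?case by simp
next
  case (Cons u ys)
  then show ?case by (auto simp: min_def max_def)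
qed

definition rate :: "(nat \<Rightarrow> nat \<Rightarrow> real) \<Rightarrow> nat \<Rightarrow> nat \<times> nat \<Rightarrow> real" where
  "rate lam N x = lam N (fst x) * lam N (snd x) / lN lam N"

fun pw :: "(nat \<Rightarrow> nat \<Rightarrow> real) \<Rightarrow> nat \<Rightarrow> nat \<Rightarrow> nat list \<Rightarrow> ennreal" where
  "pw lam N a [] = 1"
| "pw lam N a (u # ys) = ennreal (lam N a * lam N u / lN lam N) * pw lam N u ys"

lemma prod_keys: "prod_list (map (\<lambda>x. ennreal (rate lam N x)) (keys a xs)) = pw lam N a xs"
  by (induct xs arbitrary: a) (auto simp: rate_def min_def max_def mult.commute)

lemma poi_graph_alt: "poi_graph lam N = Pi_pmf {(i, j). i < j \<and> j < N} 0 (\<lambda>x. poisson_pmf (rate lam N x))"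
  unfolding poi_graph_def rate_def by (intro Pi_pmf_cong) auto

lemma path_prob:
  assumes pos: "\<And>i. i < N \<Longrightarrow> lam N i > 0" and a: "a < N" and xs: "set xs \<subseteq> {0..<N}"
    and d: "distinct (a # xs)"
  shows "(\<integral>\<^sup>+e. indicator {e. pathok N e a xs} e \<partial>measure_pmf (poi_graph lam N)) \<le> pw lam N a xs"
proof -
  define A where "A = {(i, j). i < j \<and> j < (N::nat)}"
  define K where "K = set (keys a xs)"
  define f where "f = (\<lambda>x (y::nat). if x \<in> K then indicator {0<..} y else (1::ennreal))"
  have finA: "finite A" unfolding A_def by (rule finite_subset[of _ "{..<N} \<times> {..<N}"]) auto
  have KA: "K \<subseteq> A" unfolding K_def A_def using keys_sub[OF a xs d] by auto
  have lpos: "lN lam N > 0" unfolding lN_def using a pos by (intro sum_pos) auto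
  have rpos: "rate lam N x > 0" if "x \<in> A" for x
    using that pos lpos unfolding A_def rate_def by auto
  have "(\<integral>\<^sup>+e. indicator {e. pathok N e a xs} e \<partial>measure_pmf (poi_graph lam N))
      \<le> (\<integral>\<^sup>+e. (\<Prod>x\<in>A. f x (e x)) \<partial>measure_pmf (poi_graph lam N))"
  proof (intro nn_integral_mono)
    fix e
    show "indicator {e. pathok N e a xs} e \<le> (\<Prod>x\<in>A. f x (e x))"
    proof (cases "pathok N e a xs")
      case True
      have "(\<Prod>x\<in>A. f x (e x)) = 1"
        using keys_pathok[OF True] unfolding f_def K_def by (intro prod.neutral) auto
      then show ?thesis by (simp add: indicator_def)
    qed simp
  qed
  also have "\<dots> = (\<Prod>x\<in>A. \<integral>\<^sup>+y. f x y \<partial>measure_pmf (poisson_pmf (rate lam N x)))"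
    unfolding poi_graph_alt A_def[symmetric] using finA by (rule nn_integral_prod_Pi_pmf)
  also have "\<dots> \<le> (\<Prod>x\<in>A. if x \<in> K then ennreal (rate lam N x) else 1)"
  proof (intro prod_mono_ennreal)
    fix x assume x: "x \<in> A"
    show "(\<integral>\<^sup>+y. f x y \<partial>measure_pmf (poisson_pmf (rate lam N x))) \<le> (if x \<in> K then ennreal (rate lam N x) else 1)"
      unfolding f_def using poisson_pos_prob[OF rpos[OF x]] by (auto simp: measure_pmf.emeasure_space_1)
  qed
  also have "\<dots> = (\<Prod>x\<in>K. ennreal (rate lam N x))"
    using KA finA by (subst prod.inter_restrict[symmetric]) (auto simp: Int_absorb1 inf.absorb2)
  also have "\<dots> = pw lam N a xs"
    unfolding K_def using keys_distinct[OF d] by (simp add: prod.distinct_set_conv_list prod_keys)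
  finally show ?thesis .
qed

lemma Lk_Suc: "Lk N (Suc k) = (\<lambda>(xs, n). n # xs) ` (Lk N k \<times> {0..<N})"
  unfolding Lk_def by (rule lists_length_Suc_eq)

lemma Lk_0: "Lk N 0 = {[]}"
  unfolding Lk_def by auto

lemma pw_sum_Suc:
  "(\<Sum>xs\<in>Lk N (Suc k). pw lam N a xs) = (\<Sum>u<N. ennreal (lam N a * lam N u / lN lam N) * (\<Sum>ys\<in>Lk N k. pw lam N u ys))"
proof -
  have inj: "inj_on (\<lambda>(xs, n). n # xs) (Lk N k \<times> {0..<N})"
    by (auto simp: inj_on_def)
  have "(\<Sum>xs\<in>Lk N (Suc k). pw lam N a xs) = (\<Sum>(ys, u)\<in>Lk N k \<times> {0..<N}. pw lam N a (u # ys))"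
    unfolding Lk_Suc by (subst sum.reindex[OF inj]) (simp add: case_prod_unfold)
  also have "\<dots> = (\<Sum>ys\<in>Lk N k. \<Sum>u\<in>{0..<N}. ennreal (lam N a * lam N u / lN lam N) * pw lam N u ys)"
    by (subst sum.cartesian_product[symmetric]) simp
  also have "\<dots> = (\<Sum>u\<in>{0..<N}. \<Sum>ys\<in>Lk N k. ennreal (lam N a * lam N u / lN lam N) * pw lam N u ys)"
    by (rule sum.swap)
  also have "\<dots> = (\<Sum>u<N. ennreal (lam N a * lam N u / lN lam N) * (\<Sum>ys\<in>Lk N k. pw lam N u ys))"
    by (simp add: sum_distrib_left atLeast0LessThan)
  finally show ?thesis .
qed

lemma pw_sum:
  assumes pos: "\<And>i. i < N \<Longrightarrow> lam N i > 0"
  shows "a < N \<Longrightarrow> (\<Sum>xs\<in>Lk N (Suc k). pw lam N a xs) = ennreal (lam N a) * ennreal (nuN lam N) ^ k"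
proof (induction k arbitrary: a)
  case 0
  have lpos: "lN lam N > 0" unfolding lN_def using 0 pos by (intro sum_pos) auto
  have "(\<Sum>xs\<in>Lk N (Suc 0). pw lam N a xs) = (\<Sum>u<N. ennreal (lam N a * lam N u / lN lam N))"
    by (simp add: pw_sum_Suc Lk_0)
  also have "\<dots> = ennreal (\<Sum>u<N. lam N a * lam N u / lN lam N)"
    using pos 0 lpos by (intro sum_ennreal) (auto intro!: divide_nonneg_pos mult_nonneg_nonneg less_imp_le)
  also have "(\<Sum>u<N. lam N a * lam N u / lN lam N) = lam N a"
    using lpos by (simp add: sum_divide_distrib[symmetric] sum_distrib_left[symmetric] lN_def[symmetric])
  finally show ?case by simp
next
  case (Suc k)
  have lpos: "lN lam N > 0" unfolding lN_def using Suc.prems pos by (intro sum_pos) auto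
  have nupos: "nuN lam N \<ge> 0" unfolding nuN_def using lpos by (auto intro!: divide_nonneg_pos sum_nonneg)
  have "(\<Sum>xs\<in>Lk N (Suc (Suc k)). pw lam N a xs)
      = (\<Sum>u<N. ennreal (lam N a * lam N u / lN lam N) * (ennreal (lam N u) * ennreal (nuN lam N) ^ k))"
    by (subst pw_sum_Suc) (auto intro!: sum.cong simp: Suc.IH)
  also have "\<dots> = (\<Sum>u<N. ennreal (lam N a * lam N u / lN lam N * lam N u)) * ennreal (nuN lam N) ^ k"
    unfolding sum_distrib_right
  proof (intro sum.cong refl)
    fix u assume u: "u \<in> {..<N}"
    have h1: "lam N a * lam N u / lN lam N \<ge> 0" "lam N u \<ge> 0"
      using pos[OF Suc.prems] pos[of u] u lpos by (auto intro!: divide_nonneg_pos)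
    show "ennreal (lam N a * lam N u / lN lam N) * (ennreal (lam N u) * ennreal (nuN lam N) ^ k)
        = ennreal (lam N a * lam N u / lN lam N * lam N u) * ennreal (nuN lam N) ^ k"
      using h1 by (simp only: ennreal_mult mult.assoc)
  qed
  also have "(\<Sum>u<N. ennreal (lam N a * lam N u / lN lam N * lam N u)) = ennreal (\<Sum>u<N. lam N a * lam N u / lN lam N * lam N u)"
    using pos Suc.prems lpos by (intro sum_ennreal) (auto intro!: divide_nonneg_pos mult_nonneg_nonneg less_imp_le)
  also have "(\<Sum>u<N. lam N a * lam N u / lN lam N * lam N u) = lam N a * nuN lam N"
    unfolding nuN_def by (simp add: sum_divide_distrib[symmetric] sum_distrib_left power2_eq_square mult_ac)
  also have "ennreal (lam N a * nuN lam N) = ennreal (lam N a) * ennreal (nuN lam N)"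
    using nupos pos[OF Suc.prems] by (simp add: ennreal_mult)
  finally show ?case by (simp add: mult_ac)
qed

lemma card_filter_ennreal: "finite S \<Longrightarrow> (of_nat (card {x \<in> S. P x}) :: ennreal) = (\<Sum>x\<in>S. indicator {x. P x} x)"
proof -
  assume fin: "finite S"
  have "(\<Sum>x\<in>S. indicator {x. P x} x) = (\<Sum>x\<in>S. if P x then 1 else (0::ennreal))"
    by (intro sum.cong) (auto simp: indicator_def)
  also have "\<dots> = (\<Sum>x\<in>{x \<in> S. P x}. (1::ennreal))"
    using sum.inter_filter[OF fin, of "\<lambda>_. (1::ennreal)" P] by simp
  also have "\<dots> = of_nat (card {x \<in> S. P x})" by simp
  finally show ?thesis by simp
qed

lemma ball_mean:
  assumes pos: "\<And>i. i < N \<Longrightarrow> lam N i > 0" and a: "a < N"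
  shows "(\<integral>\<^sup>+e. of_nat (card (ball_t N e a t)) \<partial>measure_pmf (poi_graph lam N))
     \<le> 1 + (\<Sum>k<t. ennreal (lam N a) * ennreal (nuN lam N) ^ k)"
proof -
  have "(\<integral>\<^sup>+e. of_nat (card (ball_t N e a t)) \<partial>measure_pmf (poi_graph lam N))
     \<le> (\<integral>\<^sup>+e. (\<Sum>k\<le>t. \<Sum>xs\<in>Lk N k. indicator {xs. distinct (a # xs) \<and> pathok N e a xs} xs) \<partial>measure_pmf (poi_graph lam N))"
  proof (intro nn_integral_mono)
    fix e
    have "(of_nat (card (ball_t N e a t)) :: ennreal) \<le> of_nat (\<Sum>k\<le>t. card {xs \<in> Lk N k. distinct (a # xs) \<and> pathok N e a xs})"
      using ball_card_le by (subst of_nat_le_iff) 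
    also have "\<dots> = (\<Sum>k\<le>t. \<Sum>xs\<in>Lk N k. indicator {xs. distinct (a # xs) \<and> pathok N e a xs} xs)"
      by (simp add: card_filter_ennreal finite_Lk)
    finally show "(of_nat (card (ball_t N e a t)) :: ennreal) \<le> (\<Sum>k\<le>t. \<Sum>xs\<in>Lk N k. indicator {xs. distinct (a # xs) \<and> pathok N e a xs} xs)" .
  qed
  also have "\<dots> = (\<Sum>k\<le>t. \<Sum>xs\<in>Lk N k. \<integral>\<^sup>+e. indicator {xs. distinct (a # xs) \<and> pathok N e a xs} xs \<partial>measure_pmf (poi_graph lam N))"
    by (simp add: nn_integral_sum finite_Lk)
  also have "\<dots> \<le> (\<Sum>k\<le>t. \<Sum>xs\<in>Lk N k. pw lam N a xs)"
  proof (intro sum_mono)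
    fix k xs assume xs: "xs \<in> Lk N k"
    show "(\<integral>\<^sup>+e. indicator {xs. distinct (a # xs) \<and> pathok N e a xs} xs \<partial>measure_pmf (poi_graph lam N)) \<le> pw lam N a xs"
    proof (cases "distinct (a # xs)")
      case True
      have "(\<integral>\<^sup>+e. indicator {xs. distinct (a # xs) \<and> pathok N e a xs} xs \<partial>measure_pmf (poi_graph lam N))
          = (\<integral>\<^sup>+e. indicator {e. pathok N e a xs} e \<partial>measure_pmf (poi_graph lam N))"
        using True by (intro nn_integral_cong) (simp add: indicator_def)
      also have "\<dots> \<le> pw lam N a xs"
        using xs True by (intro path_prob[where lam=lam and N=N, OF pos a]) (auto simp: Lk_def)
      finally show ?thesis .
    qed (auto simp: indicator_def)
  qed
  also have "\<dots> = 1 + (\<Sum>k<t. ennreal (lam N a) * ennreal (nuN lam N) ^ k)"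
    by (subst sum.atMost_shift) (simp add: Lk_0 pw_sum[where lam=lam and N=N, OF pos a])
  finally show ?thesis .
qed

lemma pmf_markov:
  fixes f :: "'a \<Rightarrow> real"
  assumes x: "x > 0" and R: "R \<ge> 0" and I: "(\<integral>\<^sup>+y. ennreal (f y) \<partial>measure_pmf M) \<le> ennreal R"
  shows "measure_pmf.prob M {y. f y > x} \<le> R / x"
proof -
  have "emeasure (measure_pmf M) {y. f y > x} = (\<integral>\<^sup>+y. indicator {y. f y > x} y \<partial>measure_pmf M)"
    by simp
  also have "\<dots> \<le> (\<integral>\<^sup>+y. ennreal (f y) * ennreal (1 / x) \<partial>measure_pmf M)"
  proof (intro nn_integral_mono)
    fix y
    show "indicator {y. f y > x} y \<le> ennreal (f y) * ennreal (1 / x)"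
    proof (cases "f y > x")
      case True
      then have "f y / x \<ge> 1" using x by simp
      then have "ennreal 1 \<le> ennreal (f y / x)" by (rule ennreal_leI)
      also have "ennreal (f y / x) = ennreal (f y) * ennreal (1 / x)"
        using True x by (simp add: ennreal_mult[symmetric])
      finally show ?thesis using True by simp
    qed simp
  qed
  also have "\<dots> = (\<integral>\<^sup>+y. ennreal (f y) \<partial>measure_pmf M) * ennreal (1 / x)"
    by (rule nn_integral_multc) simp
  also have "\<dots> \<le> ennreal R * ennreal (1 / x)"
    by (intro mult_right_mono I) simp
  also have "\<dots> = ennreal (R / x)"
    using R x by (simp add: ennreal_mult[symmetric])
  finally have "ennreal (measure_pmf.prob M {y. f y > x}) \<le> ennreal (R / x)"
    by (simp add: measure_pmf.emeasure_eq_measure)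
  then show ?thesis using R x by (simp add: ennreal_le_iff)
qed

lemma ennreal_R:
  assumes "mu \<ge> 0" "nu \<ge> 0"
  shows "1 + (\<Sum>k<t. ennreal mu * ennreal nu ^ k) = ennreal (1 + (\<Sum>k<t. mu * nu ^ k))"
proof -
  have "(\<Sum>k<t. ennreal mu * ennreal nu ^ k) = (\<Sum>k<t. ennreal (mu * nu ^ k))"
    using assms by (intro sum.cong refl) (simp add: ennreal_power ennreal_mult)
  also have "\<dots> = ennreal (\<Sum>k<t. mu * nu ^ k)"
    using assms by (intro sum_ennreal) auto
  moreover have "0 \<le> (\<Sum>k<t. mu * nu ^ k)" using assms by (intro sum_nonneg) auto
  ultimately show ?thesis by (simp add: ennreal_plus)
qed

lemma nr_bound:
  assumes N: "N > 0" and pos: "\<And>i. i < N \<Longrightarrow> lam N i > 0" and x: "x > 0"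
  shows "nr_total_tail lam N t x \<le> (1 + (\<Sum>k<t. muN lam N * nuN lam N ^ k)) / x"
proof -
  have lpos: "lN lam N > 0" unfolding lN_def using N pos by (intro sum_pos) auto
  have nupos: "nuN lam N \<ge> 0" unfolding nuN_def using lpos by (auto intro!: divide_nonneg_pos sum_nonneg)
  have mupos: "muN lam N \<ge> 0" unfolding muN_def using lpos by auto
  have "(\<integral>\<^sup>+h. ennreal (real (\<Sum>k\<le>t. length (h ! k))) \<partial>measure_pmf (nr_history lam N t))
      = (\<integral>\<^sup>+h. Sn t h \<partial>measure_pmf (nr_history lam N t))"
    unfolding Sn_def by (intro nn_integral_cong) (metis of_nat_sum ennreal_of_nat_eq_real_of_nat)
  also have "\<dots> = ennreal (1 + (\<Sum>k<t. muN lam N * nuN lam N ^ k))"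
    using hist_mean[where lam=lam and N=N and t=t, OF N pos] ennreal_R[OF mupos nupos] by simp
  finally show ?thesis unfolding nr_total_tail_def
    by (intro pmf_markov x) (auto intro!: add_nonneg_nonneg sum_nonneg mult_nonneg_nonneg zero_le_power mupos nupos)
qed

lemma graph_bound:
  assumes N: "N > 0" and pos: "\<And>i. i < N \<Longrightarrow> lam N i > 0" and x: "x > 0"
  shows "graph_ball_tail lam N t x \<le> (1 + (\<Sum>k<t. muN lam N * nuN lam N ^ k)) / x"
proof -
  have lpos: "lN lam N > 0" unfolding lN_def using N pos by (intro sum_pos) auto
  have nupos: "nuN lam N \<ge> 0" unfolding nuN_def using lpos by (auto intro!: divide_nonneg_pos sum_nonneg)
  have mupos: "muN lam N \<ge> 0" unfolding muN_def using lpos by auto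
  define g where "g = (\<lambda>a. 1 + (\<Sum>k<t. lam N a * nuN lam N ^ k))"
  have "(\<integral>\<^sup>+y. ennreal (real (card (ball_t N (snd y) (fst y) t))) \<partial>measure_pmf (pair_pmf (pmf_of_set {0..<N}) (poi_graph lam N)))
      = (\<integral>\<^sup>+a. (\<integral>\<^sup>+e. of_nat (card (ball_t N e a t)) \<partial>measure_pmf (poi_graph lam N)) \<partial>measure_pmf (pmf_of_set {0..<N}))"
    by (simp add: nn_integral_pair_pmf' ennreal_of_nat_eq_real_of_nat[symmetric])
  also have "\<dots> \<le> (\<integral>\<^sup>+a. ennreal (g a) \<partial>measure_pmf (pmf_of_set {0..<N}))"
  proof (intro nn_integral_mono_AE AE_pmfI)
    fix a assume "a \<in> set_pmf (pmf_of_set {0..<N})"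
    then have a: "a < N" using N by auto
    have "ennreal (g a) = 1 + (\<Sum>k<t. ennreal (lam N a) * ennreal (nuN lam N) ^ k)"
      unfolding g_def using ennreal_R[OF less_imp_le[OF pos[OF a]] nupos] by (rule sym)
    then show "(\<integral>\<^sup>+e. of_nat (card (ball_t N e a t)) \<partial>measure_pmf (poi_graph lam N)) \<le> ennreal (g a)"
      using ball_mean[where lam=lam and N=N, OF pos a] by simp
  qed
  also have "\<dots> = (\<Sum>a\<in>{0..<N}. ennreal (g a)) / of_nat N"
    using N by (subst nn_integral_pmf_of_set) auto
  also have "\<dots> = ennreal ((\<Sum>a\<in>{0..<N}. g a) / real N)"
  proof -
    have gp: "g a \<ge> 0" if "a < N" for a
    proof -
      have "0 \<le> (\<Sum>k<t. lam N a * nuN lam N ^ k)"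
        using pos[OF that] nupos by (intro sum_nonneg mult_nonneg_nonneg zero_le_power) auto
      then show ?thesis unfolding g_def by linarith
    qed
    have "(\<Sum>a\<in>{0..<N}. ennreal (g a)) = ennreal (\<Sum>a\<in>{0..<N}. g a)"
      using gp by (intro sum_ennreal) auto
    moreover have "(\<Sum>a\<in>{0..<N}. g a) \<ge> 0" using gp by (intro sum_nonneg) auto
    ultimately show ?thesis using N by (simp add: ennreal_of_nat_eq_real_of_nat divide_ennreal)
  qed
  also have "(\<Sum>a\<in>{0..<N}. g a) / real N = 1 + (\<Sum>k<t. muN lam N * nuN lam N ^ k)"
  proof -
    have "(\<Sum>a\<in>{0..<N}. \<Sum>k<t. lam N a * nuN lam N ^ k) = (\<Sum>k<t. \<Sum>a\<in>{0..<N}. lam N a * nuN lam N ^ k)"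
      by (rule sum.swap)
    also have "\<dots> = (\<Sum>k<t. lN lam N * nuN lam N ^ k)"
      unfolding lN_def by (simp add: sum_distrib_right atLeast0LessThan)
    finally have s1: "(\<Sum>a\<in>{0..<N}. g a) = real N + (\<Sum>k<t. lN lam N * nuN lam N ^ k)"
      unfolding g_def by (simp add: sum.distrib)
    show ?thesis using N unfolding s1 muN_def
      by (simp add: add_divide_distrib sum_divide_distrib)
  qed
  finally have I: "(\<integral>\<^sup>+y. ennreal (real (card (ball_t N (snd y) (fst y) t))) \<partial>measure_pmf (pair_pmf (pmf_of_set {0..<N}) (poi_graph lam N)))
      \<le> ennreal (1 + (\<Sum>k<t. muN lam N * nuN lam N ^ k))" .
  have "graph_ball_tail lam N t x = measure_pmf.prob (pair_pmf (pmf_of_set {0..<N}) (poi_graph lam N)) {y. real (card (ball_t N (snd y) (fst y) t)) > x}"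
    unfolding graph_ball_tail_def by (intro arg_cong[where f="measure_pmf.prob _"]) auto
  also have "\<dots> \<le> (1 + (\<Sum>k<t. muN lam N * nuN lam N ^ k)) / x"
    by (intro pmf_markov x I) (auto intro!: add_nonneg_nonneg sum_nonneg mult_nonneg_nonneg zero_le_power mupos nupos)
  finally show ?thesis .
qed

lemma ln_powr_bound:
  assumes a: "\<alpha> > 0" and N: "(N::real) \<ge> 1"
  shows "ln N * N powr (-\<alpha>) \<le> 1 / \<alpha>"
proof -
  have Np: "N > 0" using N by simp
  have "ln (N powr \<alpha>) \<le> N powr \<alpha> - 1" using Np by (intro ln_le_minus_one) simp
  then have "\<alpha> * ln N \<le> N powr \<alpha>" using Np by (simp add: ln_powr)
  then have "\<alpha> * ln N * N powr (-\<alpha>) \<le> N powr \<alpha> * N powr (-\<alpha>)"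
    by (intro mult_right_mono) auto
  also have "N powr \<alpha> * N powr (-\<alpha>) = 1" using Np by (simp add: powr_add[symmetric])
  finally have "\<alpha> * (ln N * N powr (-\<alpha>)) \<le> 1" by (simp add: mult.assoc)
  then show ?thesis using a by (simp add: field_simps mult.commute)
qed

lemma analytic:
  fixes nu \<alpha> c M \<eta> \<delta> muN' nuN' :: real and N t :: nat
  assumes nu: "nu > 1" and a: "\<alpha> > 0" and c: "c \<ge> 0" and M: "M \<ge> 0"
    and eta: "-1/2 < \<eta>" "\<eta> < 1/2"
    and N: "real N \<ge> 1" "real N \<ge> nu"
    and mu': "0 \<le> muN'" "muN' \<le> M"
    and nu': "0 \<le> nuN'" "nuN' \<le> nu + c * real N powr (-\<alpha>)"
    and t: "real t \<le> (1/2 + \<eta>) * log nu (real N)"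
  shows "(1 + (\<Sum>k<t. muN' * nuN' ^ k)) / real N powr (1/2 + \<delta>)
     \<le> (1 + M * exp (c / (nu * \<alpha> * ln nu))) * log nu (real N) * real N powr (-(\<delta> - \<eta>))"
proof -
  define L where "L = log nu (real N)"
  define x where "x = c * real N powr (-\<alpha>)"
  define E where "E = exp (c / (nu * \<alpha> * ln nu))"
  have Np: "real N > 0" using N by simp
  have lnnu: "ln nu > 0" using nu by simp
  have L1: "L \<ge> 1" unfolding L_def using N nu by (subst le_log_iff) auto
  have tL: "real t \<le> L"
  proof -
    have "(1/2 + \<eta>) * L \<le> 1 * L" using eta L1 by (intro mult_right_mono) auto
    then show ?thesis using t unfolding L_def[symmetric] by linarith
  qed
  have x0: "x \<ge> 0" unfolding x_def using c by simp
  have b1: "nu + x \<ge> 1" using nu x0 by simp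
  have sumb: "(\<Sum>k<t. muN' * nuN' ^ k) \<le> real t * (M * (nu + x) ^ t)"
  proof -
    have "(\<Sum>k<t. muN' * nuN' ^ k) \<le> (\<Sum>k<t. M * (nu + x) ^ t)"
    proof (intro sum_mono)
      fix k assume k: "k \<in> {..<t}"
      have "nuN' ^ k \<le> (nu + x) ^ k" using nu' unfolding x_def by (intro power_mono) auto
      also have "\<dots> \<le> (nu + x) ^ t" using b1 k by (intro power_increasing) auto
      finally have "nuN' ^ k \<le> (nu + x) ^ t" .
      then show "muN' * nuN' ^ k \<le> M * (nu + x) ^ t"
        using mu' nu' by (intro mult_mono) auto
    qed
    then show ?thesis by simp
  qed
  have "(nu + x) ^ t = nu ^ t * (1 + x / nu) ^ t"
  proof -
    have "nu + x = nu * (1 + x / nu)" using nu by (simp add: field_simps)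
    then show ?thesis by (simp only: power_mult_distrib)
  qed
  also have "(1 + x / nu) ^ t \<le> exp (x / nu) ^ t"
    using x0 nu by (intro power_mono) (auto simp: add.commute exp_ge_add_one_self)
  also have "exp (x / nu) ^ t = exp (real t * (x / nu))"
    by (subst exp_of_nat_mult) simp
  also have "real t * (x / nu) \<le> c / (nu * \<alpha> * ln nu)"
  proof -
    have "real t * x \<le> L * x" using tL x0 by (intro mult_right_mono) auto
    also have "L * x = c / ln nu * (ln (real N) * real N powr (-\<alpha>))"
      unfolding L_def x_def log_def by (simp add: field_simps)
    also have "\<dots> \<le> c / ln nu * (1 / \<alpha>)"
      using c lnnu by (intro mult_left_mono ln_powr_bound a N(1)) auto
    finally have "real t * x \<le> c / (\<alpha> * ln nu)" by (simp add: mult.commute)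
    then have "real t * x / nu \<le> c / (\<alpha> * ln nu) / nu" using nu by (intro divide_right_mono) auto
    then show ?thesis by (simp add: field_simps)
  qed
  then have "exp (real t * (x / nu)) \<le> E" unfolding E_def by simp
  finally have p1: "(nu + x) ^ t \<le> nu ^ t * E" using nu by (simp add: mult_left_mono)
  have p2: "nu ^ t \<le> real N powr (1/2 + \<eta>)"
  proof -
    have "nu ^ t = nu powr real t" using nu by (simp add: powr_realpow)
    also have "\<dots> \<le> nu powr ((1/2 + \<eta>) * L)" using t nu unfolding L_def by (intro powr_mono) auto
    also have "\<dots> = real N powr (1/2 + \<eta>)"
      unfolding L_def using nu Np by (simp add: powr_powr[symmetric] mult.commute)
    finally show ?thesis .
  qed
  have E0: "E \<ge> 0" unfolding E_def by simp
  have R: "1 + (\<Sum>k<t. muN' * nuN' ^ k) \<le> 1 + L * M * E * real N powr (1/2 + \<eta>)"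
  proof -
    have "real t * (M * (nu + x) ^ t) \<le> L * (M * (real N powr (1/2 + \<eta>) * E))"
    proof (intro mult_mono mult_left_mono)
      show "(nu + x) ^ t \<le> real N powr (1/2 + \<eta>) * E"
        using p1 p2 E0 by (smt (verit) mult_right_mono)
    qed (use tL M L1 b1 in auto)
    then show ?thesis using sumb by (simp add: mult_ac)
  qed
  have "(1 + (\<Sum>k<t. muN' * nuN' ^ k)) / real N powr (1/2 + \<delta>)
      \<le> (1 + L * M * E * real N powr (1/2 + \<eta>)) / real N powr (1/2 + \<delta>)"
    using R Np by (intro divide_right_mono) auto
  also have "\<dots> = real N powr (-(1/2 + \<delta>)) + L * M * E * real N powr (-(\<delta> - \<eta>))"
  proof -
    have e1: "real N powr (-(\<delta> - \<eta>)) = real N powr (1/2 + \<eta>) / real N powr (1/2 + \<delta>)"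
      by (subst powr_diff[symmetric]) simp
    have e2: "real N powr (-(1/2 + \<delta>)) = 1 / real N powr (1/2 + \<delta>)"
      by (rule powr_minus_divide)
    show ?thesis unfolding e1 e2 by (simp add: add_divide_distrib)
  qed
  also have "real N powr (-(1/2 + \<delta>)) \<le> L * real N powr (-(\<delta> - \<eta>))"
  proof -
    have "real N powr (-(1/2 + \<delta>)) \<le> real N powr (-(\<delta> - \<eta>))"
      using N eta by (intro powr_mono) auto
    also have "\<dots> \<le> L * real N powr (-(\<delta> - \<eta>))" using L1 by (simp add: mult_le_cancel_right1)
    finally show ?thesis .
  qed
  finally show ?thesis unfolding L_def[symmetric] E_def[symmetric] by (simp add: algebra_simps)
qed

theorem lemmaD2:
  fixes lam :: "nat \<Rightarrow> nat \<Rightarrow> real" and mu nu \<eta> \<delta> :: real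
  assumes pos: "\<And>N i. i < N \<Longrightarrow> lam N i > 0"
    and C1: "cond_C1 lam mu nu"
    and C2: "cond_C2 lam"
    and C3: "cond_C3 lam"
    and eta: "-1/2 < \<eta>" "\<eta> < 1/2"
    and delta: "-1/2 < \<delta>" "\<delta> < 1/2"
  shows "\<exists>C N0. \<forall>N\<ge>N0. \<forall>t::nat. real t \<le> (1/2 + \<eta>) * log nu (real N) \<longrightarrow>
           nr_total_tail lam N t (real N powr (1/2 + \<delta>))
              \<le> C * log nu (real N) * real N powr (-(\<delta> - \<eta>)) \<and>
           graph_ball_tail lam N t (real N powr (1/2 + \<delta>))
              \<le> C * log nu (real N) * real N powr (-(\<delta> - \<eta>))"
proof -
  from C1 obtain \<alpha> where mu: "mu > 0" and nu: "nu > 1" and a: "\<alpha> > 0"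
    and O1: "(\<lambda>N. \<bar>muN lam N - mu\<bar>) \<in> O(\<lambda>N. real N powr (-\<alpha>))"
    and O2: "(\<lambda>N. \<bar>nuN lam N - nu\<bar>) \<in> O(\<lambda>N. real N powr (-\<alpha>))"
    unfolding cond_C1_def by blast
  obtain c1 where c1: "c1 > 0" "eventually (\<lambda>N. norm \<bar>muN lam N - mu\<bar> \<le> c1 * norm (real N powr (-\<alpha>))) at_top"
    using landau_o.bigE[OF O1] by blast
  obtain c2 where c2: "c2 > 0" "eventually (\<lambda>N. norm \<bar>nuN lam N - nu\<bar> \<le> c2 * norm (real N powr (-\<alpha>))) at_top"
    using landau_o.bigE[OF O2] by blast
  obtain N1 where N1: "\<And>N. N \<ge> N1 \<Longrightarrow> \<bar>muN lam N - mu\<bar> \<le> c1 * real N powr (-\<alpha>) \<and> \<bar>nuN lam N - nu\<bar> \<le> c2 * real N powr (-\<alpha>)"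
    using eventually_conj[OF c1(2) c2(2)] unfolding eventually_at_top_linorder by auto
  define M where "M = mu + c1"
  define C where "C = 1 + M * exp (c2 / (nu * \<alpha> * ln nu))"
  define N0 where "N0 = max N1 (max 1 (nat \<lceil>nu\<rceil>))"
  show ?thesis
  proof (intro exI[of _ C] exI[of _ N0] allI impI)
    fix N t assume N: "N \<ge> N0" and t: "real t \<le> (1/2 + \<eta>) * log nu (real N)"
    have NN1: "N \<ge> N1" and Ng1: "real N \<ge> 1" using N unfolding N0_def by auto
    have "nat \<lceil>nu\<rceil> \<le> N" using N unfolding N0_def by auto
    then have "real (nat \<lceil>nu\<rceil>) \<le> real N" by linarith
    moreover have "nu \<le> real (nat \<lceil>nu\<rceil>)" by linarith
    ultimately have Nnu: "real N \<ge> nu" by linarith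
    have Np: "N > 0" using Ng1 by simp
    have posN: "\<And>i. i < N \<Longrightarrow> lam N i > 0" using pos by blast
    have lpos: "lN lam N > 0" unfolding lN_def using Np pos by (intro sum_pos) auto
    have nupos: "nuN lam N \<ge> 0" unfolding nuN_def using lpos by (auto intro!: divide_nonneg_pos sum_nonneg)
    have mupos: "muN lam N \<ge> 0" unfolding muN_def using lpos by auto
    have pw1: "real N powr (-\<alpha>) \<le> 1"
    proof -
      have "real N powr (-\<alpha>) \<le> real N powr 0" using Ng1 a by (intro powr_mono) auto
      then show ?thesis using Np by simp
    qed
    have muM: "muN lam N \<le> M"
    proof -
      have "muN lam N \<le> mu + c1 * real N powr (-\<alpha>)" using N1[OF NN1] by linarith
      also have "\<dots> \<le> mu + c1" using pw1 c1 by (simp add: mult_le_cancel_left1)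
      finally show ?thesis unfolding M_def .
    qed
    have nub: "nuN lam N \<le> nu + c2 * real N powr (-\<alpha>)" using N1[OF NN1] by linarith
    have xpos: "real N powr (1/2 + \<delta>) > 0" using Np by simp
    have an: "(1 + (\<Sum>k<t. muN lam N * nuN lam N ^ k)) / real N powr (1/2 + \<delta>)
        \<le> C * log nu (real N) * real N powr (-(\<delta> - \<eta>))"
      unfolding C_def
      by (rule analytic[OF nu a less_imp_le[OF c2(1)] _ eta Ng1 Nnu mupos muM nupos nub t])
         (use mu c1 in \<open>simp add: M_def\<close>)
    show "nr_total_tail lam N t (real N powr (1/2 + \<delta>)) \<le> C * log nu (real N) * real N powr (-(\<delta> - \<eta>)) \<and>
          graph_ball_tail lam N t (real N powr (1/2 + \<delta>)) \<le> C * log nu (real N) * real N powr (-(\<delta> - \<eta>))"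
      using nr_bound[where lam=lam and N=N and t=t, OF Np posN xpos]
            graph_bound[where lam=lam and N=N and t=t, OF Np posN xpos] an
      by linarith
  qed
qed

end
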